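(* Let $A$ be an algebra such that $\nabla_A\in\mathcal K(A)$ and the commutator of $A$ is distributive w.r.t. the join. Let $\theta\in\mathrm{Con}(A)$ and $\phi\in V_A(\theta)$. Then $\phi$ is a minimal element of $(V_A(\theta),\subseteq)$ if and only if $\nabla_A\setminus\phi$ is a maximal element (w.r.t. inclusion) of the set of $m$-systems of $A$ that are disjoint from $\theta$.
   Context: Let $A$ be an algebra of a fixed signature. $\mathrm{Con}(A)$ is the lattice of congruences of $A$ with bottom $\Delta_A$ and top $\nabla_A=A^2$; $\mathcal K(A)$ is the set of finitely generated (compact) congruences; $Cg_A(a,b)$ is the congruence generated by $(a,b)$. $[\cdot,\cdot]_A$ is the term condition commutator: for $\alpha,\beta,\mu\in\mathrm{Con}(A)$, $C(\alpha,\beta;\mu)$ means that for all $n,k$, every $(n+k)$-ary term $t$, all $(a_i,b_i)\in\alpha$ and $(c_j,d_j)\in\beta$: $(t(\bar a,\bar c),t(\bar a,\bar d))\in\mu$ iff $(t(\bar b,\bar c),t(\bar b,\bar d))\in\mu$; $[\alpha,\beta]_A=\bigcap\{\mu: C(\alpha,\beta;\mu)\}$. "Distributive w.r.t. the join" means $[\alpha\vee\beta,\gamma]_A=[\alpha,\gamma]_A\vee[\beta,\gamma]_A$ and $[\gamma,\alpha\vee\beta]_A=[\gamma,\alpha]_A\vee[\gamma,\beta]_A$. A congruence $\phi\neq\nabla_A$ is prime if $[\alpha,\beta]_A\subseteq\phi$ implies $\alpha\subseteq\phi$ or $\beta\subseteq\phi$; $\mathrm{Spec}(A)$ is the set of prime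 congruences and $V_A(\theta)=\{\phi\in\mathrm{Spec}(A):\theta\subseteq\phi\}$. A subset $S\subseteq A^2$ is an $m$-system iff for all $(a,b),(c,d)\in S$, $[Cg_A(a,b),Cg_A(c,d)]_A\cap S\neq\emptyset$. *)

theory Defs
  imports Main
begin

text \<open>An algebra of a fixed signature is given by a carrier A, an arity
function ar on operation symbols of type 'f, and an interpretation ops, where
ops f is applied to argument lists of length ar f.\<close>

definition is_algebra :: "'a set \<Rightarrow> ('f \<Rightarrow> nat) \<Rightarrow> ('f \<Rightarrow> 'a list \<Rightarrow> 'a) \<Rightarrow> bool" where
  "is_algebra A ar ops \<longleftrightarrow>
     (\<forall>f xs. length xs = ar f \<and> set xs \<subseteq> A \<longrightarrow> ops f xs \<in> A)"

datatype 'f uterm = UVar nat | UFun 'f "'f uterm list"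

fun wf_term :: "('f \<Rightarrow> nat) \<Rightarrow> 'f uterm \<Rightarrow> bool" where
  "wf_term ar (UVar i) = True"
| "wf_term ar (UFun f ts) = (length ts = ar f \<and> (\<forall>t\<in>set ts. wf_term ar t))"

fun term_vars :: "'f uterm \<Rightarrow> nat set" where
  "term_vars (UVar i) = {i}"
| "term_vars (UFun f ts) = (\<Union>t\<in>set ts. term_vars t)"

fun term_eval :: "('f \<Rightarrow> 'a list \<Rightarrow> 'a) \<Rightarrow> (nat \<Rightarrow> 'a) \<Rightarrow> 'f uterm \<Rightarrow> 'a" where
  "term_eval ops \<sigma> (UVar i) = \<sigma> i"
| "term_eval ops \<sigma> (UFun f ts) = ops f (map (term_eval ops \<sigma>) ts)"

definition is_congruence :: "'a set \<Rightarrow> ('f \<Rightarrow> nat) \<Rightarrow> ('f \<Rightarrow> 'a list \<Rightarrow> 'a) \<Rightarrow> 'a rel \<Rightarrow> bool" where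
  "is_congruence A ar ops \<theta> \<longleftrightarrow> equiv A \<theta> \<and>
     (\<forall>f xs ys. length xs = ar f \<and> length ys = ar f \<and> list_all2 (\<lambda>x y. (x, y) \<in> \<theta>) xs ys
        \<longrightarrow> (ops f xs, ops f ys) \<in> \<theta>)"

definition Con :: "'a set \<Rightarrow> ('f \<Rightarrow> nat) \<Rightarrow> ('f \<Rightarrow> 'a list \<Rightarrow> 'a) \<Rightarrow> 'a rel set" where
  "Con A ar ops = {\<theta>. is_congruence A ar ops \<theta>}"

definition Cg_set :: "'a set \<Rightarrow> ('f \<Rightarrow> nat) \<Rightarrow> ('f \<Rightarrow> 'a list \<Rightarrow> 'a) \<Rightarrow> 'a rel \<Rightarrow> 'a rel" where
  "Cg_set A ar ops F = \<Inter>{\<theta> \<in> Con A ar ops. F \<subseteq> \<theta>}"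

definition Cg :: "'a set \<Rightarrow> ('f \<Rightarrow> nat) \<Rightarrow> ('f \<Rightarrow> 'a list \<Rightarrow> 'a) \<Rightarrow> 'a \<Rightarrow> 'a \<Rightarrow> 'a rel" where
  "Cg A ar ops a b = Cg_set A ar ops {(a, b)}"

definition KCon :: "'a set \<Rightarrow> ('f \<Rightarrow> nat) \<Rightarrow> ('f \<Rightarrow> 'a list \<Rightarrow> 'a) \<Rightarrow> 'a rel set" where
  "KCon A ar ops = {\<theta>. \<exists>F. finite F \<and> F \<subseteq> A \<times> A \<and> \<theta> = Cg_set A ar ops F}"

definition con_join :: "'a set \<Rightarrow> ('f \<Rightarrow> nat) \<Rightarrow> ('f \<Rightarrow> 'a list \<Rightarrow> 'a) \<Rightarrow> 'a rel \<Rightarrow> 'a rel \<Rightarrow> 'a rel" where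
  "con_join A ar ops \<alpha> \<beta> = Cg_set A ar ops (\<alpha> \<union> \<beta>)"

definition join_asg :: "nat \<Rightarrow> (nat \<Rightarrow> 'a) \<Rightarrow> (nat \<Rightarrow> 'a) \<Rightarrow> nat \<Rightarrow> 'a" where
  "join_asg n a c = (\<lambda>i. if i < n then a i else c (i - n))"

definition centralizes :: "('f \<Rightarrow> nat) \<Rightarrow> ('f \<Rightarrow> 'a list \<Rightarrow> 'a) \<Rightarrow> 'a rel \<Rightarrow> 'a rel \<Rightarrow> 'a rel \<Rightarrow> bool" where
  "centralizes ar ops \<alpha> \<beta> \<mu> \<longleftrightarrow>
     (\<forall>n k t a b c d. wf_term ar t \<and> term_vars t \<subseteq> {..<n + k}
        \<and> (\<forall>i<n. (a i, b i) \<in> \<alpha>) \<and> (\<forall>j<k. (c j, d j) \<in> \<beta>) \<longrightarrow>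
        ((term_eval ops (join_asg n a c) t, term_eval ops (join_asg n a d) t) \<in> \<mu>
         \<longleftrightarrow> (term_eval ops (join_asg n b c) t, term_eval ops (join_asg n b d) t) \<in> \<mu>))"

definition commutator :: "'a set \<Rightarrow> ('f \<Rightarrow> nat) \<Rightarrow> ('f \<Rightarrow> 'a list \<Rightarrow> 'a) \<Rightarrow> 'a rel \<Rightarrow> 'a rel \<Rightarrow> 'a rel" where
  "commutator A ar ops \<alpha> \<beta> = \<Inter>{\<mu> \<in> Con A ar ops. centralizes ar ops \<alpha> \<beta> \<mu>}"

definition comm_join_distributive :: "'a set \<Rightarrow> ('f \<Rightarrow> nat) \<Rightarrow> ('f \<Rightarrow> 'a list \<Rightarrow> 'a) \<Rightarrow> bool" where
  "comm_join_distributive A ar ops \<longleftrightarrow>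
     (\<forall>\<alpha>\<in>Con A ar ops. \<forall>\<beta>\<in>Con A ar ops. \<forall>\<gamma>\<in>Con A ar ops.
        commutator A ar ops (con_join A ar ops \<alpha> \<beta>) \<gamma>
          = con_join A ar ops (commutator A ar ops \<alpha> \<gamma>) (commutator A ar ops \<beta> \<gamma>)
      \<and> commutator A ar ops \<gamma> (con_join A ar ops \<alpha> \<beta>)
          = con_join A ar ops (commutator A ar ops \<gamma> \<alpha>) (commutator A ar ops \<gamma> \<beta>))"

definition prime_con :: "'a set \<Rightarrow> ('f \<Rightarrow> nat) \<Rightarrow> ('f \<Rightarrow> 'a list \<Rightarrow> 'a) \<Rightarrow> 'a rel \<Rightarrow> bool" where
  "prime_con A ar ops \<phi> \<longleftrightarrow> \<phi> \<in> Con A ar ops \<and> \<phi> \<noteq> A \<times> A \<and>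
     (\<forall>\<alpha>\<in>Con A ar ops. \<forall>\<beta>\<in>Con A ar ops.
        commutator A ar ops \<alpha> \<beta> \<subseteq> \<phi> \<longrightarrow> \<alpha> \<subseteq> \<phi> \<or> \<beta> \<subseteq> \<phi>)"

definition Spec :: "'a set \<Rightarrow> ('f \<Rightarrow> nat) \<Rightarrow> ('f \<Rightarrow> 'a list \<Rightarrow> 'a) \<Rightarrow> 'a rel set" where
  "Spec A ar ops = {\<phi>. prime_con A ar ops \<phi>}"

definition V :: "'a set \<Rightarrow> ('f \<Rightarrow> nat) \<Rightarrow> ('f \<Rightarrow> 'a list \<Rightarrow> 'a) \<Rightarrow> 'a rel \<Rightarrow> 'a rel set" where
  "V A ar ops \<theta> = {\<phi> \<in> Spec A ar ops. \<theta> \<subseteq> \<phi>}"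

definition m_system :: "'a set \<Rightarrow> ('f \<Rightarrow> nat) \<Rightarrow> ('f \<Rightarrow> 'a list \<Rightarrow> 'a) \<Rightarrow> 'a rel \<Rightarrow> bool" where
  "m_system A ar ops S \<longleftrightarrow> S \<subseteq> A \<times> A \<and>
     (\<forall>a b c d. (a, b) \<in> S \<and> (c, d) \<in> S \<longrightarrow>
        commutator A ar ops (Cg A ar ops a b) (Cg A ar ops c d) \<inter> S \<noteq> {})"

definition minimal_in :: "'b set \<Rightarrow> 'b set set \<Rightarrow> bool" where
  "minimal_in x M \<longleftrightarrow> x \<in> M \<and> (\<forall>y\<in>M. y \<subseteq> x \<longrightarrow> y = x)"

definition maximal_in :: "'b set \<Rightarrow> 'b set set \<Rightarrow> bool" where
  "maximal_in x M \<longleftrightarrow> x \<in> M \<and> (\<forall>y\<in>M. x \<subseteq> y \<longrightarrow> y = x)"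

end

theory Submission imports Defs begin

lemma con_sub: "\<theta> \<in> Con A ar ops \<Longrightarrow> \<theta> \<subseteq> A \<times> A"
  by (simp add: Con_def is_congruence_def equiv_def)

lemma con_refl: "\<theta> \<in> Con A ar ops \<Longrightarrow> x \<in> A \<Longrightarrow> (x,x) \<in> \<theta>"
  by (simp add: Con_def is_congruence_def equiv_def refl_on_def)

lemma con_sym: "\<theta> \<in> Con A ar ops \<Longrightarrow> (x,y) \<in> \<theta> \<Longrightarrow> (y,x) \<in> \<theta>"
  unfolding Con_def is_congruence_def equiv_def sym_def by blast

lemma con_trans: "\<theta> \<in> Con A ar ops \<Longrightarrow> (x,y) \<in> \<theta> \<Longrightarrow> (y,z) \<in> \<theta> \<Longrightarrow> (x,z) \<in> \<theta>"
  unfolding Con_def is_congruence_def equiv_def trans_def by blast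

lemma con_ops: "\<theta> \<in> Con A ar ops \<Longrightarrow> length xs = ar f \<Longrightarrow> length ys = ar f \<Longrightarrow>
   list_all2 (\<lambda>x y. (x, y) \<in> \<theta>) xs ys \<Longrightarrow> (ops f xs, ops f ys) \<in> \<theta>"
  unfolding Con_def is_congruence_def by blast

lemma full_con: "is_algebra A ar ops \<Longrightarrow> A \<times> A \<in> Con A ar ops"
proof -
  assume alg: "is_algebra A ar ops"
  have "(ops f xs, ops f ys) \<in> A \<times> A" if "length xs = ar f" "length ys = ar f"
     "list_all2 (\<lambda>x y. (x, y) \<in> A \<times> A) xs ys" for f xs ys
  proof -
    have "set xs \<subseteq> A" "set ys \<subseteq> A" using that(3)
      by (auto simp: list_all2_conv_all_nth in_set_conv_nth)
    then show ?thesis using alg that unfolding is_algebra_def by auto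
  qed
  then show ?thesis unfolding Con_def is_congruence_def equiv_def refl_on_def sym_def trans_def
    by blast
qed

lemma Inter_con: assumes "M \<subseteq> Con A ar ops" "M \<noteq> {}" shows "\<Inter>M \<in> Con A ar ops"
proof -
  have "equiv A (\<Inter>M)"
    unfolding equiv_def refl_on_def sym_def trans_def
  proof (intro conjI allI ballI impI)
    obtain r where r: "r \<in> M" using assms by blast
    show "\<Inter>M \<subseteq> A \<times> A" using con_sub[of r] r assms by blast
    show "\<And>x. x \<in> A \<Longrightarrow> (x, x) \<in> \<Inter> M" using assms con_refl[of _ A ar ops] by blast
    show "\<And>x y. (x, y) \<in> \<Inter> M \<Longrightarrow> (y, x) \<in> \<Inter> M" using assms con_sym[of _ A ar ops] by blast
    show "\<And>x y z. (x, y) \<in> \<Inter> M \<Longrightarrow> (y, z) \<in> \<Inter> M \<Longrightarrow> (x, z) \<in> \<Inter> M"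
      using assms con_trans[of _ A ar ops] by blast
  qed
  moreover have "(ops f xs, ops f ys) \<in> \<Inter>M" if "length xs = ar f" "length ys = ar f"
     "list_all2 (\<lambda>x y. (x, y) \<in> \<Inter>M) xs ys" for f xs ys
  proof
    fix r assume r: "r \<in> M"
    have "list_all2 (\<lambda>x y. (x, y) \<in> r) xs ys"
      using that(3) by (rule list_all2_mono) (use r in blast)
    then show "(ops f xs, ops f ys) \<in> r" using con_ops[of r A ar ops] r assms that by blast
  qed
  ultimately show ?thesis unfolding Con_def is_congruence_def by blast
qed

lemma Cg_set_con: "is_algebra A ar ops \<Longrightarrow> F \<subseteq> A \<times> A \<Longrightarrow> Cg_set A ar ops F \<in> Con A ar ops"
  unfolding Cg_set_def by (rule Inter_con) (use full_con in blast)+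

lemma Cg_set_ge: "is_algebra A ar ops \<Longrightarrow> F \<subseteq> A \<times> A \<Longrightarrow> F \<subseteq> Cg_set A ar ops F"
  unfolding Cg_set_def by blast

lemma Cg_set_le: "\<mu> \<in> Con A ar ops \<Longrightarrow> F \<subseteq> \<mu> \<Longrightarrow> Cg_set A ar ops F \<subseteq> \<mu>"
  unfolding Cg_set_def by blast

lemma term_compat:
  assumes "\<mu> \<in> Con A ar ops" "wf_term ar t" "\<forall>i\<in>term_vars t. (\<sigma> i, \<tau> i) \<in> \<mu>"
  shows "(term_eval ops \<sigma> t, term_eval ops \<tau> t) \<in> \<mu>"
  using assms(2,3)
proof (induction t)
  case (UVar i) then show ?case by simp
next
  case (UFun f ts)
  have "list_all2 (\<lambda>x y. (x, y) \<in> \<mu>) (map (term_eval ops \<sigma>) ts) (map (term_eval ops \<tau>) ts)"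
    unfolding list_all2_map1 list_all2_map2 using UFun by (auto intro!: list.rel_refl_strong)
  then show ?case using UFun.prems con_ops[OF assms(1)] by simp
qed

lemma cent_left:
  assumes a: "\<alpha> \<in> Con A ar ops" and b: "\<beta> \<in> Con A ar ops"
  shows "centralizes ar ops \<alpha> \<beta> \<alpha>"
  unfolding centralizes_def
proof (intro allI impI)
  fix n k t a b c d
  assume h: "wf_term ar t \<and> term_vars t \<subseteq> {..<n + k} \<and> (\<forall>i<n. (a i, b i) \<in> \<alpha>) \<and> (\<forall>j<k. (c j, d j) \<in> \<beta>)"
  have cA: "c j \<in> A" "d j \<in> A" if "j < k" for j using h that con_sub[OF b] by blast+
  have 1: "(term_eval ops (join_asg n a e) t, term_eval ops (join_asg n b e) t) \<in> \<alpha>"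
    if e: "\<forall>j<k. e j \<in> A" for e
  proof (rule term_compat[OF a])
    show "wf_term ar t" using h by blast
    show "\<forall>i\<in>term_vars t. (join_asg n a e i, join_asg n b e i) \<in> \<alpha>"
    proof
      fix i assume i: "i \<in> term_vars t"
      then have "i < n + k" using h by blast
      then show "(join_asg n a e i, join_asg n b e i) \<in> \<alpha>"
        using h e con_refl[OF a] unfolding join_asg_def by auto
    qed
  qed
  have X: "(term_eval ops (join_asg n a c) t, term_eval ops (join_asg n b c) t) \<in> \<alpha>"
    using 1 cA by blast
  have Y: "(term_eval ops (join_asg n a d) t, term_eval ops (join_asg n b d) t) \<in> \<alpha>"
    using 1 cA by blast
  show "((term_eval ops (join_asg n a c) t, term_eval ops (join_asg n a d) t) \<in> \<alpha>) =
        ((term_eval ops (join_asg n b c) t, term_eval ops (join_asg n b d) t) \<in> \<alpha>)"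
    using X Y con_sym[OF a] con_trans[OF a] by meson
qed

lemma cent_right:
  assumes a: "\<alpha> \<in> Con A ar ops" and b: "\<beta> \<in> Con A ar ops"
  shows "centralizes ar ops \<alpha> \<beta> \<beta>"
  unfolding centralizes_def
proof (intro allI impI)
  fix n k t a b c d
  assume h: "wf_term ar t \<and> term_vars t \<subseteq> {..<n + k} \<and> (\<forall>i<n. (a i, b i) \<in> \<alpha>) \<and> (\<forall>j<k. (c j, d j) \<in> \<beta>)"
  have 1: "(term_eval ops (join_asg n e c) t, term_eval ops (join_asg n e d) t) \<in> \<beta>"
    if e: "\<forall>j<n. e j \<in> A" for e
  proof (rule term_compat[OF b])
    show "wf_term ar t" using h by blast
    show "\<forall>i\<in>term_vars t. (join_asg n e c i, join_asg n e d i) \<in> \<beta>"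
    proof
      fix i assume i: "i \<in> term_vars t"
      then have "i < n + k" using h by blast
      then show "(join_asg n e c i, join_asg n e d i) \<in> \<beta>"
        using h e con_refl[OF b] unfolding join_asg_def by auto
    qed
  qed
  have "a j \<in> A" "b j \<in> A" if "j < n" for j using h that con_sub[OF a] by blast+
  then show "((term_eval ops (join_asg n a c) t, term_eval ops (join_asg n a d) t) \<in> \<beta>) =
        ((term_eval ops (join_asg n b c) t, term_eval ops (join_asg n b d) t) \<in> \<beta>)"
    using 1 by blast
qed

lemma comm_le_left: "\<alpha> \<in> Con A ar ops \<Longrightarrow> \<beta> \<in> Con A ar ops \<Longrightarrow> commutator A ar ops \<alpha> \<beta> \<subseteq> \<alpha>"
  unfolding commutator_def using cent_left by blast

lemma comm_le_right: "\<alpha> \<in> Con A ar ops \<Longrightarrow> \<beta> \<in> Con A ar ops \<Longrightarrow> commutator A ar ops \<alpha> \<beta> \<subseteq> \<beta>"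
  unfolding commutator_def using cent_right by blast

lemma comm_mono: "\<alpha> \<subseteq> \<alpha>' \<Longrightarrow> \<beta> \<subseteq> \<beta>' \<Longrightarrow> commutator A ar ops \<alpha> \<beta> \<subseteq> commutator A ar ops \<alpha>' \<beta>'"
proof -
  assume s: "\<alpha> \<subseteq> \<alpha>'" "\<beta> \<subseteq> \<beta>'"
  have "centralizes ar ops \<alpha> \<beta> \<mu>" if "centralizes ar ops \<alpha>' \<beta>' \<mu>" for \<mu>
    unfolding centralizes_def
  proof (intro allI impI)
    fix n k t a b c d
    assume h: "wf_term ar t \<and> term_vars t \<subseteq> {..<n + k} \<and> (\<forall>i<n. (a i, b i) \<in> \<alpha>) \<and> (\<forall>j<k. (c j, d j) \<in> \<beta>)"
    then have "wf_term ar t \<and> term_vars t \<subseteq> {..<n + k} \<and> (\<forall>i<n. (a i, b i) \<in> \<alpha>') \<and> (\<forall>j<k. (c j, d j) \<in> \<beta>')"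
      using s by blast
    then show "((term_eval ops (join_asg n a c) t, term_eval ops (join_asg n a d) t) \<in> \<mu>) =
        ((term_eval ops (join_asg n b c) t, term_eval ops (join_asg n b d) t) \<in> \<mu>)"
      using that unfolding centralizes_def by blast
  qed
  then show ?thesis unfolding commutator_def by blast
qed

lemma chain_list:
  assumes "C \<noteq> {}" "\<forall>x\<in>C. \<forall>y\<in>C. x \<subseteq> y \<or> y \<subseteq> x"
  shows "list_all2 (\<lambda>x y. (x, y) \<in> \<Union>C) xs ys \<Longrightarrow> \<exists>r\<in>C. list_all2 (\<lambda>x y. (x, y) \<in> r) xs ys"
proof (induction xs arbitrary: ys)
  case Nil then show ?case using assms(1) by auto
next
  case (Cons x xs)
  then obtain y ys' where ys: "ys = y # ys'" "(x,y) \<in> \<Union>C" "list_all2 (\<lambda>x y. (x, y) \<in> \<Union>C) xs ys'"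
    by (cases ys) auto
  obtain r1 where r1: "r1 \<in> C" "(x,y) \<in> r1" using ys by blast
  obtain r2 where r2: "r2 \<in> C" "list_all2 (\<lambda>x y. (x, y) \<in> r2) xs ys'" using Cons.IH ys by blast
  show ?case
  proof (cases "r1 \<subseteq> r2")
    case True
    then show ?thesis using r1 r2 ys by (auto intro!: bexI[of _ r2])
  next
    case False
    then have "r2 \<subseteq> r1" using assms r1 r2 by blast
    then have "list_all2 (\<lambda>x y. (x, y) \<in> r1) xs ys'" using r2(2) list_all2_mono[of "\<lambda>x y. (x, y) \<in> r2" xs ys' "\<lambda>x y. (x, y) \<in> r1"] by blast
    then show ?thesis using r1 ys by (auto intro!: bexI[of _ r1])
  qed
qed

lemma chain_con:
  assumes "C \<noteq> {}" "C \<subseteq> Con A ar ops" "\<forall>x\<in>C. \<forall>y\<in>C. x \<subseteq> y \<or> y \<subseteq> x"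
  shows "\<Union>C \<in> Con A ar ops"
proof -
  have "equiv A (\<Union>C)"
    unfolding equiv_def refl_on_def sym_def trans_def
  proof (intro conjI allI ballI impI)
    obtain r where r: "r \<in> C" using assms by blast
    show "\<Union>C \<subseteq> A \<times> A" using con_sub[of _ A ar ops] assms by blast
    show "\<And>x. x \<in> A \<Longrightarrow> (x, x) \<in> \<Union> C" using r assms con_refl[of r A ar ops] by blast
    show "\<And>x y. (x, y) \<in> \<Union> C \<Longrightarrow> (y, x) \<in> \<Union> C" using assms con_sym[of _ A ar ops] by blast
    fix x y z assume "(x, y) \<in> \<Union> C" "(y, z) \<in> \<Union> C"
    then obtain r1 r2 where "r1 \<in> C" "r2 \<in> C" "(x,y) \<in> r1" "(y,z) \<in> r2" by blast
    then show "(x, z) \<in> \<Union> C" using assms(2,3) con_trans[of r1 A ar ops] con_trans[of r2 A ar ops]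
      by (metis UnionI subsetD)
  qed
  moreover have "(ops f xs, ops f ys) \<in> \<Union>C" if "length xs = ar f" "length ys = ar f"
     and l: "list_all2 (\<lambda>x y. (x, y) \<in> \<Union>C) xs ys" for f xs ys
  proof -
    obtain r where "r \<in> C" "list_all2 (\<lambda>x y. (x, y) \<in> r) xs ys"
      using chain_list[OF assms(1,3) l] by blast
    then show ?thesis using con_ops[of r A ar ops] assms(2) that by blast
  qed
  ultimately show ?thesis unfolding Con_def is_congruence_def by blast
qed

lemma prime_Con: "prime_con A ar ops \<phi> \<Longrightarrow> \<phi> \<in> Con A ar ops"
  unfolding prime_con_def by blast
lemma prime_ne: "prime_con A ar ops \<phi> \<Longrightarrow> \<phi> \<noteq> A \<times> A"
  unfolding prime_con_def by blast
lemma prime_prop: "prime_con A ar ops \<phi> \<Longrightarrow> \<alpha> \<in> Con A ar ops \<Longrightarrow> \<beta> \<in> Con A ar ops \<Longrightarrow>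
   \<not> \<alpha> \<subseteq> \<phi> \<Longrightarrow> \<not> \<beta> \<subseteq> \<phi> \<Longrightarrow> \<not> commutator A ar ops \<alpha> \<beta> \<subseteq> \<phi>"
  unfolding prime_con_def by blast

lemma dist_l: "comm_join_distributive A ar ops \<Longrightarrow> \<alpha> \<in> Con A ar ops \<Longrightarrow> \<beta> \<in> Con A ar ops \<Longrightarrow> \<gamma> \<in> Con A ar ops \<Longrightarrow>
  commutator A ar ops (con_join A ar ops \<alpha> \<beta>) \<gamma>
          = con_join A ar ops (commutator A ar ops \<alpha> \<gamma>) (commutator A ar ops \<beta> \<gamma>)"
  unfolding comm_join_distributive_def Ball_def by (elim allE impE) (assumption | (elim conjE, assumption))+
lemma dist_r: "comm_join_distributive A ar ops \<Longrightarrow> \<alpha> \<in> Con A ar ops \<Longrightarrow> \<beta> \<in> Con A ar ops \<Longrightarrow> \<gamma> \<in> Con A ar ops \<Longrightarrow>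
  commutator A ar ops \<gamma> (con_join A ar ops \<alpha> \<beta>)
          = con_join A ar ops (commutator A ar ops \<gamma> \<alpha>) (commutator A ar ops \<gamma> \<beta>)"
  unfolding comm_join_distributive_def Ball_def by (elim allE impE) (assumption | (elim conjE, assumption))+

lemma prime_exists:
  assumes alg: "is_algebra A ar ops" and dist: "comm_join_distributive A ar ops"
    and th: "\<theta> \<in> Con A ar ops" and ms: "m_system A ar ops S" and dj: "S \<inter> \<theta> = {}"
    and ne: "S \<noteq> {}"
  shows "\<exists>\<psi>. prime_con A ar ops \<psi> \<and> \<theta> \<subseteq> \<psi> \<and> \<psi> \<inter> S = {}"
proof -
  define F where "F = {\<psi> \<in> Con A ar ops. \<theta> \<subseteq> \<psi> \<and> \<psi> \<inter> S = {}}"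
  have "\<exists>M\<in>F. \<forall>X\<in>F. M \<subseteq> X \<longrightarrow> X = M"
  proof (rule subset_Zorn_nonempty)
    show "F \<noteq> {}" using th dj unfolding F_def by blast
    fix C assume C: "C \<noteq> {}" "subset.chain F C"
    then have C': "C \<subseteq> F" "\<forall>x\<in>C. \<forall>y\<in>C. x \<subseteq> y \<or> y \<subseteq> x"
      unfolding subset.chain_def by auto
    have "\<Union>C \<in> Con A ar ops" using chain_con[OF C(1) _ C'(2)] C'(1) unfolding F_def by blast
    then show "\<Union>C \<in> F" using C C' unfolding F_def by blast
  qed
  then obtain \<psi> where psi: "\<psi> \<in> F" and mx: "\<And>X. X \<in> F \<Longrightarrow> \<psi> \<subseteq> X \<Longrightarrow> X = \<psi>" by blast
  have pc: "\<psi> \<in> Con A ar ops" "\<theta> \<subseteq> \<psi>" "\<psi> \<inter> S = {}" using psi unfolding F_def by auto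
  have SA: "S \<subseteq> A \<times> A" using ms unfolding m_system_def by blast
  have ext: "\<exists>p. p \<in> con_join A ar ops \<psi> \<alpha> \<and> p \<in> S"
    if a: "\<alpha> \<in> Con A ar ops" "\<not> \<alpha> \<subseteq> \<psi>" for \<alpha>
  proof (rule ccontr)
    assume "\<nexists>p. p \<in> con_join A ar ops \<psi> \<alpha> \<and> p \<in> S"
    moreover have J: "con_join A ar ops \<psi> \<alpha> \<in> Con A ar ops"
      unfolding con_join_def by (rule Cg_set_con[OF alg]) (use con_sub[OF pc(1)] con_sub[OF a(1)] in blast)
    moreover have "\<psi> \<union> \<alpha> \<subseteq> con_join A ar ops \<psi> \<alpha>"
      unfolding con_join_def by (rule Cg_set_ge[OF alg]) (use con_sub[OF pc(1)] con_sub[OF a(1)] in blast)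
    ultimately have "con_join A ar ops \<psi> \<alpha> \<in> F" "\<psi> \<subseteq> con_join A ar ops \<psi> \<alpha>"
      "\<alpha> \<subseteq> con_join A ar ops \<psi> \<alpha>"
      using pc unfolding F_def by blast+
    then show False using mx[of "con_join A ar ops \<psi> \<alpha>"] a(2) by auto
  qed
  have J: "con_join A ar ops \<psi> \<alpha> \<in> Con A ar ops" if "\<alpha> \<in> Con A ar ops" for \<alpha>
    unfolding con_join_def by (rule Cg_set_con[OF alg]) (use con_sub[OF pc(1)] con_sub[OF that] in blast)
  have Jle: "con_join A ar ops x y \<subseteq> \<psi>" if "x \<subseteq> \<psi>" "y \<subseteq> \<psi>" for x y
    unfolding con_join_def using Cg_set_le[OF pc(1)] that by blast
  have "prime_con A ar ops \<psi>"
    unfolding prime_con_def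
  proof (intro conjI ballI impI)
    show "\<psi> \<in> Con A ar ops" by (fact pc(1))
    show "\<psi> \<noteq> A \<times> A" using pc(3) SA ne by blast
    fix \<alpha> \<beta> assume a: "\<alpha> \<in> Con A ar ops" and b: "\<beta> \<in> Con A ar ops"
      and c: "commutator A ar ops \<alpha> \<beta> \<subseteq> \<psi>"
    show "\<alpha> \<subseteq> \<psi> \<or> \<beta> \<subseteq> \<psi>"
    proof (rule ccontr)
      assume "\<not> (\<alpha> \<subseteq> \<psi> \<or> \<beta> \<subseteq> \<psi>)"
      then obtain p q where p: "p \<in> con_join A ar ops \<psi> \<alpha>" "p \<in> S"
        and q: "q \<in> con_join A ar ops \<psi> \<beta>" "q \<in> S" using ext[OF a] ext[OF b] \<open>\<not> (\<alpha> \<subseteq> \<psi> \<or> \<beta> \<subseteq> \<psi>)\<close> by blast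
      obtain x y u v where pq: "p = (x,y)" "q = (u,v)" by fastforce
      have "commutator A ar ops (Cg A ar ops x y) (Cg A ar ops u v) \<inter> S \<noteq> {}"
        using ms p(2) q(2) unfolding pq m_system_def by blast
      moreover have "Cg A ar ops x y \<subseteq> con_join A ar ops \<psi> \<alpha>"
        unfolding Cg_def using Cg_set_le[OF J[OF a]] p pq by blast
      moreover have "Cg A ar ops u v \<subseteq> con_join A ar ops \<psi> \<beta>"
        unfolding Cg_def using Cg_set_le[OF J[OF b]] q pq by blast
      moreover have "commutator A ar ops (con_join A ar ops \<psi> \<alpha>) (con_join A ar ops \<psi> \<beta>) \<subseteq> \<psi>"
      proof -
        have d1: "commutator A ar ops (con_join A ar ops \<psi> \<alpha>) (con_join A ar ops \<psi> \<beta>)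
           = con_join A ar ops (commutator A ar ops \<psi> (con_join A ar ops \<psi> \<beta>))
                (commutator A ar ops \<alpha> (con_join A ar ops \<psi> \<beta>))"
          by (rule dist_l[OF dist pc(1) a J[OF b]])
        have d2: "commutator A ar ops \<alpha> (con_join A ar ops \<psi> \<beta>)
           = con_join A ar ops (commutator A ar ops \<alpha> \<psi>) (commutator A ar ops \<alpha> \<beta>)"
          by (rule dist_r[OF dist pc(1) b a])
        have "commutator A ar ops \<psi> (con_join A ar ops \<psi> \<beta>) \<subseteq> \<psi>"
          using comm_le_left[OF pc(1) J[OF b]] .
        moreover have "commutator A ar ops \<alpha> \<psi> \<subseteq> \<psi>"
          using comm_le_right[OF a pc(1)] .
        ultimately show ?thesis unfolding d1 d2 by (intro Jle c)
      qed
      ultimately have "commutator A ar ops (Cg A ar ops x y) (Cg A ar ops u v) \<inter> S \<subseteq> \<psi> \<inter> S"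
        using comm_mono[of "Cg A ar ops x y" "con_join A ar ops \<psi> \<alpha>" "Cg A ar ops u v" "con_join A ar ops \<psi> \<beta>" A ar ops]
        by blast
      then show False using pc(3) \<open>commutator A ar ops (Cg A ar ops x y) (Cg A ar ops u v) \<inter> S \<noteq> {}\<close>
        by blast
    qed
  qed
  then show ?thesis using pc by blast
qed

lemma compl_msys:
  assumes alg: "is_algebra A ar ops" and p: "prime_con A ar ops \<phi>" and th: "\<theta> \<subseteq> \<phi>"
  shows "m_system A ar ops (A \<times> A - \<phi>) \<and> (A \<times> A - \<phi>) \<inter> \<theta> = {}"
proof -
  have pc: "\<phi> \<in> Con A ar ops" using p by (rule prime_Con)
  have "commutator A ar ops (Cg A ar ops a b) (Cg A ar ops c d) \<inter> (A \<times> A - \<phi>) \<noteq> {}"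
    if "(a,b) \<in> A \<times> A - \<phi>" "(c,d) \<in> A \<times> A - \<phi>" for a b c d
  proof -
    have C1: "Cg A ar ops a b \<in> Con A ar ops" "Cg A ar ops c d \<in> Con A ar ops"
      unfolding Cg_def using Cg_set_con[OF alg] that by auto
    have "(a,b) \<in> Cg A ar ops a b" "(c,d) \<in> Cg A ar ops c d"
      unfolding Cg_def using Cg_set_ge[OF alg, of "{(a,b)}"] Cg_set_ge[OF alg, of "{(c,d)}"] that by auto
    then have "\<not> Cg A ar ops a b \<subseteq> \<phi>" "\<not> Cg A ar ops c d \<subseteq> \<phi>" using that by auto
    then have "\<not> commutator A ar ops (Cg A ar ops a b) (Cg A ar ops c d) \<subseteq> \<phi>"
      using prime_prop[OF p C1] by blast
    moreover have "commutator A ar ops (Cg A ar ops a b) (Cg A ar ops c d) \<subseteq> A \<times> A"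
      using comm_le_left[OF C1] con_sub[OF C1(1)] by blast
    ultimately show ?thesis by blast
  qed
  then show ?thesis unfolding m_system_def using th by blast
qed

theorem mainTheorem7:
  fixes A :: "'a set" and ar :: "'f \<Rightarrow> nat" and ops :: "'f \<Rightarrow> 'a list \<Rightarrow> 'a"
    and \<theta> \<phi> :: "'a rel"
  assumes "is_algebra A ar ops"
    and "A \<times> A \<in> KCon A ar ops"
    and "comm_join_distributive A ar ops"
    and "\<theta> \<in> Con A ar ops"
    and "\<phi> \<in> V A ar ops \<theta>"
  shows "minimal_in \<phi> (V A ar ops \<theta>) \<longleftrightarrow>
         maximal_in (A \<times> A - \<phi>) {S. m_system A ar ops S \<and> S \<inter> \<theta> = {}}"
proof -
  have pp: "prime_con A ar ops \<phi>" "\<theta> \<subseteq> \<phi>" using assms(5) unfolding V_def Spec_def by auto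
  have phiA: "\<phi> \<subseteq> A \<times> A" using con_sub[OF prime_Con[OF pp(1)]] .
  have inM: "A \<times> A - \<phi> \<in> {S. m_system A ar ops S \<and> S \<inter> \<theta> = {}}"
    using compl_msys[OF assms(1) pp] by blast
  show ?thesis
  proof
    assume mn: "minimal_in \<phi> (V A ar ops \<theta>)"
    show "maximal_in (A \<times> A - \<phi>) {S. m_system A ar ops S \<and> S \<inter> \<theta> = {}}"
      unfolding maximal_in_def
    proof (intro conjI ballI impI)
      show "A \<times> A - \<phi> \<in> {S. m_system A ar ops S \<and> S \<inter> \<theta> = {}}" by (fact inM)
      fix S assume S: "S \<in> {S. m_system A ar ops S \<and> S \<inter> \<theta> = {}}" and sub: "A \<times> A - \<phi> \<subseteq> S"
      have ne: "S \<noteq> {}" using sub phiA prime_ne[OF pp(1)] by blast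
      obtain \<psi> where psi: "prime_con A ar ops \<psi>" "\<theta> \<subseteq> \<psi>" "\<psi> \<inter> S = {}"
        using prime_exists[OF assms(1,3,4) _ _ ne] S by blast
      have psiA: "\<psi> \<subseteq> A \<times> A" using con_sub[OF prime_Con[OF psi(1)]] .
      have "\<psi> \<in> V A ar ops \<theta>" using psi unfolding V_def Spec_def by blast
      moreover have "\<psi> \<subseteq> \<phi>" using psi(3) psiA sub by blast
      ultimately have "\<psi> = \<phi>" using mn unfolding minimal_in_def by blast
      moreover have "S \<subseteq> A \<times> A" using S unfolding m_system_def by blast
      ultimately show "S = A \<times> A - \<phi>" using psi(3) sub by blast
    qed
  next
    assume mx: "maximal_in (A \<times> A - \<phi>) {S. m_system A ar ops S \<and> S \<inter> \<theta> = {}}"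
    show "minimal_in \<phi> (V A ar ops \<theta>)"
      unfolding minimal_in_def
    proof (intro conjI ballI impI)
      show "\<phi> \<in> V A ar ops \<theta>" by (fact assms(5))
      fix \<psi> assume psi: "\<psi> \<in> V A ar ops \<theta>" and sub: "\<psi> \<subseteq> \<phi>"
      have pq: "prime_con A ar ops \<psi>" "\<theta> \<subseteq> \<psi>" using psi unfolding V_def Spec_def by auto
      have psiA: "\<psi> \<subseteq> A \<times> A" using con_sub[OF prime_Con[OF pq(1)]] .
      have "A \<times> A - \<psi> \<in> {S. m_system A ar ops S \<and> S \<inter> \<theta> = {}}"
        using compl_msys[OF assms(1) pq] by blast
      moreover have "A \<times> A - \<phi> \<subseteq> A \<times> A - \<psi>" using sub by blast
      ultimately have "A \<times> A - \<psi> = A \<times> A - \<phi>" using mx unfolding maximal_in_def by blast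
      then show "\<psi> = \<phi>" using psiA phiA by blast
    qed
  qed
qed

end
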